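(* Under Assumptions A1–A4, let $n_1<n_2$ be two consecutive switch points of the core Two-Tailed Averaging algorithm. Then there exists an evaluation step $n\in[n_1,n_2-E]$ such that $L(n)=\mathcal{O}^E(n)$ or $L(n)=\mathcal{O}_E(n)$.
   Context: Let $\Theta=\mathbb{R}^d$, let $(\theta_t)_{t\in\mathbb{N}_0}$ be a sequence in $\Theta$, let $f\colon\Theta\to\mathbb{R}$ be a loss function, and let $E\in\mathbb{N}$ be the evaluation period. Evaluation steps are the multiples of $E$. For integers $t\ge \Delta\ge 1$ write $\mathrm{avg}(t,\Delta)=\frac{1}{\Delta}\sum_{i=t+1-\Delta}^{t}\theta_i$; set $f(\mathrm{avg}(t,0))=+\infty$. Core Two-Tailed Averaging: it maintains integers $S,L$ and vectors $\theta^S,\theta^L$, initially $S=L=0$, $\theta^S=\theta^L=0$. For $t=1,2,\dots$: first $\theta_t$ is added to both averages, i.e. $\theta^S\leftarrow\theta^S+(\theta_t-\theta^S)/(S+1)$, $S\leftarrow S+1$, and $\theta^L\leftarrow\theta^L+(\theta_t-\theta^L)/(L+1)$, $L\leftarrow L+1$ (so $\theta^S=\mathrm{avg}(t,S)$, $\theta^L=\mathrm{avg}(t,L)$). Then, if $E$ divides $t$: if $f(\theta^S)\le f(\theta^L)$, a switch is performed: $L\leftarrow S$, $\theta^L\leftarrow\theta^S$, $S\leftarrow 0$. $S(t),L(t)$ denote the values after the $t$-th pass through the loop. A time step $n$ is a switch point if a switch is performed at $t=n$; two switch points are consecutive if no switch point lies strictly between them. Optimal length: for $t\ge1$, $\mathcal{O}(t)$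 is a (fixed) minimizer of $\Delta\mapsto f(\mathrm{avg}(t,\Delta))$ over $\Delta\in\{1,\dots,t\}$; $\mathcal{O}_E(n)=\lfloor \mathcal{O}(n)/E\rfloor E$ and $\mathcal{O}^E(n)=\lceil \mathcal{O}(n)/E\rceil E$. Assumptions (for all evaluation steps $n\ge E$): A1: $\Delta\mapsto f(\mathrm{avg}(n,\Delta))$ is strictly decreasing on $\Delta\in\{0,E,2E,\dots,\mathcal{O}_E(n)\}$. A2: for every integer $n_+$ with $\mathcal{O}^E(n)\le n_+\le n$, $f(\mathrm{avg}(n,\mathcal{O}^E(n)))\le f(\mathrm{avg}(n,n_+))$. A3: there exists a positive multiple $n_s$ of $E$ with $\mathcal{O}(n+n_s)-\mathcal{O}(n)<n_s$. A4: $\mathcal{O}(n)\le\mathcal{O}(n+E)$. *)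

theory Defs
  imports "HOL-Analysis.Analysis" "HOL-Library.Extended_Real"
begin

definition avg :: "(nat \<Rightarrow> real ^ 'd) \<Rightarrow> nat \<Rightarrow> nat \<Rightarrow> real ^ 'd" where
  "avg \<theta> t \<Delta> = (1 / real \<Delta>) *\<^sub>R (\<Sum>i\<in>{t + 1 - \<Delta>..t}. \<theta> i)"

definition favg :: "(real ^ 'd \<Rightarrow> real) \<Rightarrow> (nat \<Rightarrow> real ^ 'd) \<Rightarrow> nat \<Rightarrow> nat \<Rightarrow> ereal" where
  "favg f \<theta> t \<Delta> = (if \<Delta> = 0 then \<infinity> else ereal (f (avg \<theta> t \<Delta>)))"

definition tta_add :: "real ^ 'd \<Rightarrow> nat \<times> nat \<times> (real ^ 'd) \<times> (real ^ 'd) \<Rightarrow> nat \<times> nat \<times> (real ^ 'd) \<times> (real ^ 'd)" where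
  "tta_add x st = (case st of (S, L, aS, aL) \<Rightarrow>
      (S + 1, L + 1, aS + (1 / real (S + 1)) *\<^sub>R (x - aS), aL + (1 / real (L + 1)) *\<^sub>R (x - aL)))"

definition tta_switch_cond :: "(real ^ 'd \<Rightarrow> real) \<Rightarrow> nat \<Rightarrow> nat \<Rightarrow> nat \<times> nat \<times> (real ^ 'd) \<times> (real ^ 'd) \<Rightarrow> bool" where
  "tta_switch_cond f E t st = (case st of (S, L, aS, aL) \<Rightarrow> E dvd t \<and> f aS \<le> f aL)"

fun tta :: "(real ^ 'd \<Rightarrow> real) \<Rightarrow> nat \<Rightarrow> (nat \<Rightarrow> real ^ 'd) \<Rightarrow> nat \<Rightarrow> nat \<times> nat \<times> (real ^ 'd) \<times> (real ^ 'd)" where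
  "tta f E \<theta> 0 = (0, 0, 0, 0)"
| "tta f E \<theta> (Suc t) =
     (let st = tta_add (\<theta> (Suc t)) (tta f E \<theta> t) in
      if tta_switch_cond f E (Suc t) st
      then (case st of (S, L, aS, aL) \<Rightarrow> (0, S, aS, aS))
      else st)"

definition tta_L :: "(real ^ 'd \<Rightarrow> real) \<Rightarrow> nat \<Rightarrow> (nat \<Rightarrow> real ^ 'd) \<Rightarrow> nat \<Rightarrow> nat" where
  "tta_L f E \<theta> t = fst (snd (tta f E \<theta> t))"

definition switch_point :: "(real ^ 'd \<Rightarrow> real) \<Rightarrow> nat \<Rightarrow> (nat \<Rightarrow> real ^ 'd) \<Rightarrow> nat \<Rightarrow> bool" where
  "switch_point f E \<theta> n \<longleftrightarrow> n \<ge> 1 \<and>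
     tta_switch_cond f E n (tta_add (\<theta> n) (tta f E \<theta> (n - 1)))"

definition OE_floor :: "(nat \<Rightarrow> nat) \<Rightarrow> nat \<Rightarrow> nat \<Rightarrow> nat" where
  "OE_floor Opt E n = (Opt n div E) * E"

definition OE_ceil :: "(nat \<Rightarrow> nat) \<Rightarrow> nat \<Rightarrow> nat \<Rightarrow> nat" where
  "OE_ceil Opt E n = ((Opt n + E - 1) div E) * E"

end

theory Submission
  imports Defs
begin

lemma scale_aux: "a *\<^sub>R (A::'a::real_vector) + b *\<^sub>R (x - a *\<^sub>R A) = (a - b*a) *\<^sub>R A + b *\<^sub>R x"
  by (simp add: algebra_simps)

lemma avg_Suc:
  assumes "1 \<le> S" "S \<le> t"
  shows "avg \<theta> (Suc t) (Suc S) = avg \<theta> t S + (1 / real (Suc S)) *\<^sub>R (\<theta> (Suc t) - avg \<theta> t S)"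
proof -
  let ?A = "\<Sum>i\<in>{t + 1 - S..t}. \<theta> i"
  have sum: "(\<Sum>i\<in>{Suc t + 1 - Suc S..Suc t}. \<theta> i) = ?A + \<theta> (Suc t)"
    using assms by (simp add: sum.cl_ivl_Suc)
  have S0: "real S > 0" using assms by simp
  have S1: "real S + real S * real S \<noteq> 0" using S0
    by (metis add_pos_pos mult_pos_pos less_irrefl)
  have "avg \<theta> t S + (1 / real (Suc S)) *\<^sub>R (\<theta> (Suc t) - avg \<theta> t S)
     = (1/real S - (1/real (Suc S)) * (1/real S)) *\<^sub>R ?A + (1 / real (Suc S)) *\<^sub>R \<theta> (Suc t)"
    unfolding avg_def by (rule scale_aux)
  also have "1/real S - (1/real (Suc S)) * (1/real S) = 1/real (Suc S)"
    using S0 by (simp add: field_simps) (metis S1 add_pos_pos mult_pos_pos less_irrefl)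
  finally have X: "avg \<theta> t S + (1 / real (Suc S)) *\<^sub>R (\<theta> (Suc t) - avg \<theta> t S)
     = (1/real (Suc S)) *\<^sub>R ?A + (1 / real (Suc S)) *\<^sub>R \<theta> (Suc t)" .
  have eq2: "avg \<theta> (Suc t) (Suc S) = (1/real(Suc S)) *\<^sub>R ?A + (1/real (Suc S)) *\<^sub>R \<theta> (Suc t)"
    unfolding avg_def sum by (simp only: scaleR_add_right)
  show ?thesis using X eq2 by metis
qed

lemma avg_one: "avg \<theta> (Suc t) (Suc 0) = \<theta> (Suc t)"
  unfolding avg_def by simp

lemma tta_inv:
  "case tta f E \<theta> t of (S, L, aS, aL) \<Rightarrow>
     S \<le> L \<and> L \<le> t \<and> (0 < t \<longrightarrow> 0 < L) \<and> (0 < S \<longrightarrow> aS = avg \<theta> t S) \<and>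
     (0 < L \<longrightarrow> aL = avg \<theta> t L) \<and> E dvd (t - S) \<and> E dvd (t - L)"
proof (induction t)
  case 0 then show ?case by simp
next
  case (Suc t)
  obtain S L aS aL where st: "tta f E \<theta> t = (S, L, aS, aL)" by (cases "tta f E \<theta> t") auto
  from Suc.IH st have I: "S \<le> L \<and> L \<le> t \<and> (0 < t \<longrightarrow> 0 < L) \<and> (0 < S \<longrightarrow> aS = avg \<theta> t S) \<and>
     (0 < L \<longrightarrow> aL = avg \<theta> t L) \<and> E dvd (t - S) \<and> E dvd (t - L)" by simp
  have aS': "aS + (1 / real (S + 1)) *\<^sub>R (\<theta> (Suc t) - aS) = avg \<theta> (Suc t) (Suc S)"
  proof (cases "S = 0")
    case True then show ?thesis by (simp add: avg_one)
  next
    case False then show ?thesis using I avg_Suc[of S t \<theta>] by simp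
  qed
  have aL': "aL + (1 / real (L + 1)) *\<^sub>R (\<theta> (Suc t) - aL) = avg \<theta> (Suc t) (Suc L)"
  proof (cases "L = 0")
    case True then show ?thesis by (simp add: avg_one)
  next
    case False then show ?thesis using I avg_Suc[of L t \<theta>] by simp
  qed
  have d1: "Suc t - Suc S = t - S" "Suc t - Suc L = t - L" by simp_all
  show ?case using I aS' aL' by (auto simp add: st tta_add_def tta_switch_cond_def Let_def)
qed

definition tta_S :: "(real ^ 'd \<Rightarrow> real) \<Rightarrow> nat \<Rightarrow> (nat \<Rightarrow> real ^ 'd) \<Rightarrow> nat \<Rightarrow> nat" where
  "tta_S f E \<theta> t = fst (tta f E \<theta> t)"

lemma inv2: "tta_S f E \<theta> t \<le> tta_L f E \<theta> t" "tta_L f E \<theta> t \<le> t"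
   "0 < t \<Longrightarrow> 0 < tta_L f E \<theta> t"
   "E dvd (t - tta_S f E \<theta> t)" "E dvd (t - tta_L f E \<theta> t)"
  using tta_inv[where f=f and E=E and \<theta>=\<theta> and t=t] by (auto simp: tta_S_def tta_L_def split: prod.splits)

lemma sp_iff: "switch_point f E \<theta> (Suc t) \<longleftrightarrow> E dvd Suc t \<and>
   f (avg \<theta> (Suc t) (Suc (tta_S f E \<theta> t))) \<le> f (avg \<theta> (Suc t) (Suc (tta_L f E \<theta> t)))"
proof -
  obtain S L aS aL where st: "tta f E \<theta> t = (S, L, aS, aL)" by (cases "tta f E \<theta> t") auto
  have I: "S \<le> L \<and> L \<le> t \<and> (0 < t \<longrightarrow> 0 < L) \<and> (0 < S \<longrightarrow> aS = avg \<theta> t S) \<and>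
     (0 < L \<longrightarrow> aL = avg \<theta> t L) \<and> E dvd (t - S) \<and> E dvd (t - L)"
    using tta_inv[where f=f and E=E and \<theta>=\<theta> and t=t] st by simp
  have aS': "aS + (1 / real (S + 1)) *\<^sub>R (\<theta> (Suc t) - aS) = avg \<theta> (Suc t) (Suc S)"
  proof (cases "S = 0")
    case True then show ?thesis by (simp add: avg_one)
  next
    case False then show ?thesis using I avg_Suc[of S t \<theta>] by simp
  qed
  have aL': "aL + (1 / real (L + 1)) *\<^sub>R (\<theta> (Suc t) - aL) = avg \<theta> (Suc t) (Suc L)"
  proof (cases "L = 0")
    case True then show ?thesis by (simp add: avg_one)
  next
    case False then show ?thesis using I avg_Suc[of L t \<theta>] by simp
  qed
  show ?thesis using aS' aL'
    by (simp add: switch_point_def st tta_add_def tta_switch_cond_def tta_S_def tta_L_def)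
qed

lemma tta_step:
  "tta_S f E \<theta> (Suc t) = (if switch_point f E \<theta> (Suc t) then 0 else Suc (tta_S f E \<theta> t))"
  "tta_L f E \<theta> (Suc t) = (if switch_point f E \<theta> (Suc t) then Suc (tta_S f E \<theta> t) else Suc (tta_L f E \<theta> t))"
proof -
  obtain S L aS aL where st: "tta f E \<theta> t = (S, L, aS, aL)" by (cases "tta f E \<theta> t") auto
  show "tta_S f E \<theta> (Suc t) = (if switch_point f E \<theta> (Suc t) then 0 else Suc (tta_S f E \<theta> t))"
    "tta_L f E \<theta> (Suc t) = (if switch_point f E \<theta> (Suc t) then Suc (tta_S f E \<theta> t) else Suc (tta_L f E \<theta> t))"
    by (simp_all add: switch_point_def st tta_add_def tta_switch_cond_def tta_S_def tta_L_def Let_def)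
qed

lemma sp_dvd: "switch_point f E \<theta> n \<Longrightarrow> E dvd n \<and> n \<ge> 1"
  by (auto simp: switch_point_def tta_switch_cond_def tta_add_def split: prod.splits)

lemma no_switch_run:
  assumes "\<And>j. a < j \<Longrightarrow> j \<le> a + m \<Longrightarrow> \<not> switch_point f E \<theta> j"
  shows "tta_S f E \<theta> (a + m) = tta_S f E \<theta> a + m \<and> tta_L f E \<theta> (a + m) = tta_L f E \<theta> a + m"
  using assms
proof (induction m)
  case 0 then show ?case by simp
next
  case (Suc m)
  have "\<not> switch_point f E \<theta> (Suc (a + m))" using Suc.prems by simp
  then show ?case using Suc by (simp add: tta_step)
qed

lemma pre_eq:
  assumes "E \<ge> 1" "E dvd a"
  shows "tta_S f E \<theta> (a + (E - 1)) = tta_S f E \<theta> a + (E - 1) \<and>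
         tta_L f E \<theta> (a + (E - 1)) = tta_L f E \<theta> a + (E - 1)"
proof (rule no_switch_run)
  fix j assume j: "a < j" "j \<le> a + (E - 1)"
  show "\<not> switch_point f E \<theta> j"
  proof
    assume "switch_point f E \<theta> j"
    then have "E dvd j" using sp_dvd by blast
    then have "E dvd (j - a)" using assms(2) by (simp add: dvd_diff_nat)
    moreover have "0 < j - a" "j - a < E" using j assms by auto
    ultimately show False by (meson nat_dvd_not_less)
  qed
qed

lemma dvd_step: "E \<ge> 1 \<Longrightarrow> E dvd (x::nat) \<Longrightarrow> E dvd y \<Longrightarrow> x < y \<Longrightarrow> x + E \<le> y"
proof -
  assume "E \<ge> 1" "E dvd x" "E dvd y" "x < y"
  then obtain a b where "x = E * a" "y = E * b" by (auto elim!: dvdE)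
  with \<open>x < y\<close> have "Suc a \<le> b" by simp
  then have "E * Suc a \<le> E * b" by (rule mult_le_mono2)
  then show "x + E \<le> y" using \<open>x = E * a\<close> \<open>y = E * b\<close> by (simp add: algebra_simps mult_le_mono)
qed


theorem mainTheorem4:
  fixes \<theta> :: "nat \<Rightarrow> real ^ 'd" and f :: "real ^ 'd \<Rightarrow> real"
    and E :: nat and Opt :: "nat \<Rightarrow> nat" and n1 n2 :: nat
  assumes E_pos: "E \<ge> 1"
    and Opt_min: "\<And>t. t \<ge> 1 \<Longrightarrow> Opt t \<in> {1..t} \<and>
                   (\<forall>\<Delta>\<in>{1..t}. f (avg \<theta> t (Opt t)) \<le> f (avg \<theta> t \<Delta>))"
    and A1: "\<And>n j k. E dvd n \<Longrightarrow> n \<ge> E \<Longrightarrow> j < k \<Longrightarrow> k * E \<le> OE_floor Opt E n \<Longrightarrow>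
                favg f \<theta> n (k * E) < favg f \<theta> n (j * E)"
    and A2: "\<And>n np. E dvd n \<Longrightarrow> n \<ge> E \<Longrightarrow> OE_ceil Opt E n \<le> np \<Longrightarrow> np \<le> n \<Longrightarrow>
                favg f \<theta> n (OE_ceil Opt E n) \<le> favg f \<theta> n np"
    and A3: "\<And>n. E dvd n \<Longrightarrow> n \<ge> E \<Longrightarrow>
                \<exists>ns. ns > 0 \<and> E dvd ns \<and> int (Opt (n + ns)) - int (Opt n) < int ns"
    and A4: "\<And>n. E dvd n \<Longrightarrow> n \<ge> E \<Longrightarrow> Opt n \<le> Opt (n + E)"
    and sw1: "switch_point f E \<theta> n1"
    and sw2: "switch_point f E \<theta> n2"
    and lt: "n1 < n2"
    and consec: "\<And>m. n1 < m \<Longrightarrow> m < n2 \<Longrightarrow> \<not> switch_point f E \<theta> m"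
  shows "\<exists>n. E dvd n \<and> n1 \<le> n \<and> n \<le> n2 - E \<and>
             (tta_L f E \<theta> n = OE_ceil Opt E n \<or> tta_L f E \<theta> n = OE_floor Opt E n)"
proof -
  define S where "S = tta_S f E \<theta>"
  define L where "L = tta_L f E \<theta>"
  define sw where "sw = switch_point f E \<theta>"
  define Oc where "Oc = OE_ceil Opt E"
  define Of where "Of = OE_floor Opt E"
  have E0: "E \<noteq> 0" using E_pos by simp
  have Opt1: "\<And>t. t \<ge> 1 \<Longrightarrow> 1 \<le> Opt t \<and> Opt t \<le> t" using Opt_min by force
  have Ocge: "E \<le> Oc t" if "t \<ge> 1" for t
  proof -
    have "E \<le> Opt t + E - 1" using Opt1[OF that] by arith
    then have "E div E \<le> (Opt t + E - 1) div E" by (rule div_le_mono)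
    then have "1 \<le> (Opt t + E - 1) div E" using E0 by simp
    then have "1 * E \<le> ((Opt t + E - 1) div E) * E" by (rule mult_le_mono1)
    then show ?thesis by (simp add: Oc_def OE_ceil_def)
  qed
  have Ocdvd: "E dvd Oc t" for t by (simp add: Oc_def OE_ceil_def)
  have Ofdvd: "E dvd Of t" for t by (simp add: Of_def OE_floor_def)
  have Oc_le: "Oc t \<le> Of t + E" for t
  proof -
    have "(Opt t + E - 1) div E \<le> (Opt t + E) div E" by (rule div_le_mono) simp
    also have "\<dots> = Opt t div E + 1" using E0 by simp
    finally have "((Opt t + E - 1) div E) * E \<le> (Opt t div E + 1) * E" by (rule mult_le_mono1)
    then show ?thesis by (simp add: Oc_def OE_ceil_def Of_def OE_floor_def algebra_simps)
  qed
  have mono: "Oc n \<le> Oc (n + E) \<and> Of n \<le> Of (n + E)" if "E dvd n" "n \<ge> E" for n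
  proof -
    have o: "Opt n \<le> Opt (n + E)" using A4 that by blast
    then have "Opt n + E - 1 \<le> Opt (n + E) + E - 1" by simp
    then have "(Opt n + E - 1) div E \<le> (Opt (n + E) + E - 1) div E" by (rule div_le_mono)
    moreover have "Opt n div E \<le> Opt (n + E) div E" using o by (rule div_le_mono)
    ultimately show ?thesis by (simp add: Oc_def OE_ceil_def Of_def OE_floor_def)
  qed
  have G: "x + E \<le> Of m" if "E dvd x" "x \<le> Oc m" "x \<noteq> Oc m" "x \<noteq> Of m" for x m
  proof -
    have "x + E \<le> Oc m" using dvd_step[OF E_pos that(1) Ocdvd] that(2,3) by simp
    then have "x \<le> Of m" using Oc_le[of m] by simp
    then have "x < Of m" using that(4) by simp
    then show ?thesis using dvd_step[OF E_pos that(1) Ofdvd] by simp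
  qed
  have fav: "favg f \<theta> n D = ereal (f (avg \<theta> n D))" if "D > 0" for n D
    using that by (simp add: favg_def)
  have pre: "Suc (S (n - 1)) = S (n - E) + E \<and> Suc (L (n - 1)) = L (n - E) + E"
    if "E dvd n" "n \<ge> E" for n
  proof -
    have "E dvd (n - E)" using that by (simp add: dvd_diff_nat)
    from pre_eq[OF E_pos this, where f=f and \<theta>=\<theta>]
    have "n - E + (E - 1) = n - 1" using that E_pos by simp
    moreover note pre_eq[OF E_pos \<open>E dvd (n - E)\<close>, where f=f and \<theta>=\<theta>]
    ultimately show ?thesis using that E_pos unfolding S_def L_def by simp
  qed
  have spn: "sw n \<longleftrightarrow> E dvd n \<and> f (avg \<theta> n (Suc (S (n - 1)))) \<le> f (avg \<theta> n (Suc (L (n - 1))))"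
    if "n \<ge> 1" for n
    using sp_iff[where f=f and E=E and \<theta>=\<theta> and t="n - 1"] that unfolding sw_def S_def L_def by simp
  have stepS: "S n = (if sw n then 0 else Suc (S (n - 1)))" if "n \<ge> 1" for n
    using tta_step(1)[where f=f and E=E and \<theta>=\<theta> and t="n - 1"] that unfolding sw_def S_def by simp
  have stepL: "L n = (if sw n then Suc (S (n - 1)) else Suc (L (n - 1)))" if "n \<ge> 1" for n
    using tta_step(2)[where f=f and E=E and \<theta>=\<theta> and t="n - 1"] that unfolding sw_def S_def L_def by simp
  have iSL: "S t \<le> L t" and iLt: "L t \<le> t" and iLpos: "0 < t \<Longrightarrow> 0 < L t"
    and iSd: "E dvd (t - S t)" and iLd: "E dvd (t - L t)" for t
    using inv2[where f=f and E=E and \<theta>=\<theta> and t=t] unfolding S_def L_def by auto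
  have Ldvd: "E dvd L n" if "E dvd n" for n
  proof -
    have "L n = n - (n - L n)" using iLt[of n] by simp
    then show ?thesis using dvd_diff_nat[OF that iLd[of n]] by simp
  qed
  have Spdvd: "E dvd Suc (S (n - 1))" if "E dvd n" "n \<ge> 1" for n
  proof -
    have "Suc (S (n - 1)) = n - (n - 1 - S (n - 1))" using iSL[of "n - 1"] iLt[of "n - 1"] that by simp
    then show ?thesis using dvd_diff_nat[OF that(1) iSd[of "n - 1"]] by simp
  qed
  have S0: "S 0 = 0" by (simp add: S_def tta_S_def)
  have INV: "Suc (S (Suc k * E - 1)) \<le> Oc (Suc k * E)" for k
  proof (induction k)
    case 0
    have "Suc (S (E - 1)) = S (E - E) + E" using pre[of E] by simp
    then show ?case using Ocge[of E] E_pos S0 by simp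
  next
    case (Suc k)
    define n where "n = Suc k * E"
    have n1: "n \<ge> E" "E dvd n" "n \<ge> 1" using E_pos by (auto simp: n_def)
    have nn: "Suc (Suc k) * E = n + E" by (simp add: n_def)
    have p: "Suc (S (n + E - 1)) = S n + E" using pre[of "n + E"] n1 by simp
    show ?case
    proof (cases "sw n")
      case True
      then have "S n = 0" using stepS[OF n1(3)] by simp
      then show ?thesis unfolding nn using p Ocge[of "n + E"] by simp
    next
      case False
      then have Sn: "S n = Suc (S (n - 1))" using stepS[OF n1(3)] by simp
      have le: "S n \<le> Oc n" using Suc.IH Sn by (simp add: n_def)
      have neq: "S n \<noteq> Oc n"
      proof
        assume eq: "S n = Oc n"
        have "Oc n \<le> Suc (L (n - 1))" using eq Sn iSL[of "n - 1"] by simp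
        moreover have "Suc (L (n - 1)) \<le> n" using iLt[of "n - 1"] n1 by simp
        ultimately have "favg f \<theta> n (OE_ceil Opt E n) \<le> favg f \<theta> n (Suc (L (n - 1)))"
          using A2[of n "Suc (L (n - 1))"] n1 by (simp add: Oc_def)
        then have "f (avg \<theta> n (Oc n)) \<le> f (avg \<theta> n (Suc (L (n - 1))))"
          using fav Ocge[OF n1(3)] E_pos by (simp add: Oc_def)
        then have "sw n" using spn[OF n1(3)] n1 eq Sn by simp
        then show False using False by simp
      qed
      have "S n + E \<le> Oc n"
        using dvd_step[OF E_pos _ Ocdvd, of "S n" n] Spdvd[OF n1(2,3)] Sn le neq by simp
      also have "\<dots> \<le> Oc (n + E)" using mono n1 by blast
      finally show ?thesis unfolding nn using p by simp
    qed
  qed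
  have d1: "E dvd n1" "n1 \<ge> 1" using sp_dvd[OF sw1] by auto
  have d2: "E dvd n2" using sp_dvd[OF sw2] by auto
  have n1E: "n1 \<ge> E" using d1 by (simp add: dvd_imp_le)
  obtain c where c: "n2 - n1 = E * c" using dvd_diff_nat[OF d2 d1(1)] by (auto elim: dvdE)
  have "c \<noteq> 0" proof assume "c = 0" then show False using c lt by simp qed
  then obtain K where K: "c = Suc K" by (cases c) auto
  have n2eq: "n2 = n1 + Suc K * E" using c K lt by (simp add: algebra_simps)
  have sw1': "sw n1" using sw1 by (simp add: sw_def)
  have Sn1: "S n1 = 0" and Ln1: "L n1 = Suc (S (n1 - 1))"
    using stepS[OF d1(2)] stepL[OF d1(2)] sw1' by auto
  obtain k0 where k0: "n1 = Suc k0 * E" using d1 n1E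
    by (metis dvdE mult.commute mult_0_right not0_implies_Suc not_one_le_zero)
  have Ln1le: "L n1 \<le> Oc n1" using INV[of k0] Ln1 k0 by simp
  have Ln1d: "E dvd L n1" using Ldvd[OF d1(1)] .
  have Ln1E: "E \<le> L n1" using Ln1d iLpos[of n1] d1 by (simp add: dvd_imp_le)
  have run: "S (n1 + k * E) = S n1 + k * E \<and> L (n1 + k * E) = L n1 + k * E" if "k \<le> K" for k
  proof -
    have "k * E \<le> K * E" using that by simp
    moreover have "Suc K * E = E + K * E" by simp
    ultimately have "n1 + k * E < n2" using n2eq E_pos by linarith
    then show ?thesis unfolding S_def L_def
      by (intro no_switch_run) (use consec in auto)
  qed
  have evd: "E dvd (n1 + k * E)" for k using d1 by simp
  show ?thesis
  proof (rule ccontr)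
    assume nG: "\<not> ?thesis"
    have NE: "L (n1 + k * E) \<noteq> Oc (n1 + k * E) \<and> L (n1 + k * E) \<noteq> Of (n1 + k * E)"
      if "k \<le> K" for k
    proof -
      have "n1 + k * E \<le> n2 - E" using that n2eq by simp
      then show ?thesis using nG evd[of k] unfolding L_def Oc_def Of_def by auto
    qed
    have B: "k \<le> K \<Longrightarrow> L (n1 + k * E) + E \<le> Of (n1 + k * E)" for k
    proof (induction k)
      case 0
      then show ?case using G[OF Ln1d Ln1le] NE[of 0] by simp
    next
      case (Suc k)
      define m where "m = n1 + k * E"
      have m': "n1 + Suc k * E = m + E" by (simp add: m_def)
      have mE: "E dvd m" "m \<ge> E" using evd[of k] n1E by (auto simp: m_def)
      have Lm': "L (m + E) = L m + E" using run[of "Suc k"] run[of k] Suc.prems m' by (simp add: m_def add.commute add.left_commute)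
      have "L m + E \<le> Of m" using Suc by (simp add: m_def)
      also have "\<dots> \<le> Of (m + E)" using mono[OF mE] by simp
      also have "\<dots> \<le> Oc (m + E)" by (simp add: Of_def Oc_def OE_floor_def OE_ceil_def div_le_mono)
      finally have "L (m + E) \<le> Oc (m + E)" using Lm' by simp
      moreover have "E dvd L (m + E)" using Ldvd mE by simp
      ultimately show ?case unfolding m' using G NE[OF Suc.prems] m' by metis
    qed
    define m where "m = n1 + K * E"
    have mE: "E dvd m" "m \<ge> E" using evd[of K] n1E by (auto simp: m_def)
    have n2m: "n2 = m + E" using n2eq by (simp add: m_def)
    have Bm: "L m + E \<le> Of m" using B[of K] by (simp add: m_def)
    have runK: "S m = K * E" "L m = L n1 + K * E" using run[of K] Sn1 by (simp_all add: m_def)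
    have pn2: "Suc (S (n2 - 1)) = S m + E" "Suc (L (n2 - 1)) = L m + E"
      using pre[of n2] d2 n2m by auto
    define lp where "lp = L m + E"
    define sp where "sp = S m + E"
    have lpOf: "lp \<le> Of n2" using Bm mono[OF mE] n2m by (simp add: lp_def)
    have sp_eq: "sp = Suc K * E" using runK by (simp add: sp_def)
    obtain q where q: "L n1 = q * E" using Ln1d by (metis dvdE mult.commute)
    have qpos: "q \<ge> 1" using Ln1E q E_pos by (cases q) auto
    have lp_eq: "lp = (q + Suc K) * E" using runK q by (simp add: lp_def algebra_simps)
    have "favg f \<theta> n2 ((q + Suc K) * E) < favg f \<theta> n2 (Suc K * E)"
      using A1[of n2 "Suc K" "q + Suc K"] d2 n2m lpOf lp_eq qpos E_pos by (simp add: Of_def)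
    then have "f (avg \<theta> n2 lp) < f (avg \<theta> n2 sp)"
      using fav E_pos qpos lp_eq sp_eq by simp
    moreover have "sw n2" using sw2 by (simp add: sw_def)
    then have "f (avg \<theta> n2 sp) \<le> f (avg \<theta> n2 lp)"
      using spn[of n2] pn2 d2 n2m E_pos by (simp add: sp_def lp_def)
    ultimately show False by simp
  qed
qed

end
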